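(* Let $\alpha\in(0,\infty)$. Let $\psi_1,\psi_2$ be Laplace exponents of (unkilled) spectrally positive Lévy processes with $\psi_1'(0+)\ge0$ and $\psi_2'(0+)\ge0$. If $\psi_1(\alpha n)=\psi_2(\alpha n)$ for all $n\in\mathbb{N}$, then $\psi_1=\psi_2$ on $[0,\infty)$.
   Context: A spectrally positive Lévy process is a Lévy process with no negative jumps that is not a subordinator. Its Laplace exponent is $\psi(z)=\log\mathbb{E}_0[e^{-z\xi_1}]=-\gamma z+\frac{\sigma^2}{2}z^2+\int_{(0,\infty)}(e^{-zh}+zh\mathbf{1}_{(0,1]}(h)-1)\,\mathsf{m}(dh)$, $z\in[0,\infty)$, for unique $\gamma\in\mathbb{R}$, $\sigma\ge0$ and a measure $\mathsf{m}$ on $(0,\infty)$ with $\int(h^2\wedge1)\mathsf{m}(dh)<\infty$; in particular $\psi(0)=0$. $\psi'(0+)$ denotes the right derivative at $0$. *)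

theory Defs
  imports "HOL-Analysis.Analysis"
begin

definition levy_measure_pos :: "real measure \<Rightarrow> bool" where
  "levy_measure_pos m \<longleftrightarrow> sets m = sets borel \<and> emeasure m {..0} = 0
      \<and> integrable m (\<lambda>h. min (h\<^sup>2) 1)"

definition lk_exponent :: "real \<Rightarrow> real \<Rightarrow> real measure \<Rightarrow> real \<Rightarrow> real" where
  "lk_exponent \<gamma> \<sigma> m z =
     - \<gamma> * z + \<sigma>\<^sup>2 / 2 * z\<^sup>2
     + (\<integral>h. (exp (- z * h) + z * h * indicator {0<..1} h - 1) \<partial>m)"

text \<open>The triplet belongs to a subordinator iff there is no Gaussian part, the jumps
  have finite variation, and the resulting drift gamma - int_(0,1] h m(dh) is nonnegative.\<close>
definition subordinator_triplet :: "real \<Rightarrow> real \<Rightarrow> real measure \<Rightarrow> bool" where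
  "subordinator_triplet \<gamma> \<sigma> m \<longleftrightarrow>
     \<sigma> = 0 \<and> integrable m (\<lambda>h. h * indicator {0<..1} h)
     \<and> \<gamma> - (\<integral>h. h * indicator {0<..1} h \<partial>m) \<ge> 0"

text \<open>psi is (on [0,infinity)) the Laplace exponent of an (unkilled) spectrally positive
  Levy process, i.e. of a Levy process without negative jumps that is not a subordinator.\<close>
definition sp_laplace_exponent :: "(real \<Rightarrow> real) \<Rightarrow> bool" where
  "sp_laplace_exponent \<psi> \<longleftrightarrow>
     (\<exists>\<gamma> \<sigma> m. \<sigma> \<ge> 0 \<and> levy_measure_pos m \<and> \<not> subordinator_triplet \<gamma> \<sigma> m
        \<and> (\<forall>z\<ge>0. \<psi> z = lk_exponent \<gamma> \<sigma> m z))"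

end

theory Submission imports Defs "HOL-Real_Asymp.Real_Asymp" begin

definition ww :: "real \<Rightarrow> real \<Rightarrow> real" where "ww a h = (1 - exp (- a * h))\<^sup>2"
definition uu :: "real \<Rightarrow> real \<Rightarrow> real" where "uu a h = exp (- a * max h 0)"
definition LL :: "real \<Rightarrow> real \<Rightarrow> real measure \<Rightarrow> (real \<Rightarrow> real) \<Rightarrow> real" where
  "LL a s m f = s\<^sup>2 * a\<^sup>2 * f 1 + (\<integral>h. f (uu a h) * ww a h \<partial>m)"

lemma lev_meas:
  assumes "levy_measure_pos m" "f \<in> borel_measurable borel"
  shows "f \<in> borel_measurable m"
proof -
  have "sets m = sets borel" using assms(1) unfolding levy_measure_pos_def by blast
  then have "borel_measurable m = borel_measurable (borel::real measure)"
    by (rule measurable_cong_sets) simp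
  then show ?thesis using assms(2) by (metis measurable_cong_sets)
qed

lemma lev_AE:
  assumes "levy_measure_pos m"
  shows "AE h in m. 0 < h"
proof -
  have s: "sets m = sets borel" and e: "emeasure m {..0} = 0"
    using assms unfolding levy_measure_pos_def by blast+
  have "{..0::real} \<in> null_sets m" using e s by (intro null_setsI) auto
  then show ?thesis by (rule AE_I') auto
qed

lemma lev_int:
  assumes "levy_measure_pos m" "f \<in> borel_measurable borel"
    and "\<And>h. 0 < h \<Longrightarrow> \<bar>f h\<bar> \<le> C * min (h\<^sup>2) 1"
  shows "integrable m f"
proof (rule Bochner_Integration.integrable_bound)
  show "integrable m (\<lambda>h. C * min (h\<^sup>2) 1)"
    using assms(1) unfolding levy_measure_pos_def by auto
  show "f \<in> borel_measurable m" using assms(1,2) by (rule lev_meas)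
  show "AE x in m. norm (f x) \<le> norm (C * min (x\<^sup>2) 1)"
    using lev_AE[OF assms(1)] by eventually_elim (use assms(3) in force)
qed

lemma exp_neg_upper:
  fixes x :: real assumes "0 \<le> x" shows "exp (- x) \<le> 1 - x + x\<^sup>2 / 2"
proof -
  define q where "q = 1 - x + x\<^sup>2 / 2"
  have "q = ((x - 1)\<^sup>2 + 1) / 2" unfolding q_def by (simp add: power2_eq_square algebra_simps)
  moreover have "0 \<le> (x-1)\<^sup>2" by simp
  ultimately have q0: "q \<ge> 0" by (metis add_nonneg_nonneg divide_nonneg_pos zero_less_numeral zero_le_one)
  have "q * (1 + x + x\<^sup>2/2) = 1 + x^4/4" unfolding q_def by (simp add: algebra_simps power2_eq_square power4_eq_xxxx)
  then have "1 \<le> q * (1 + x + x\<^sup>2/2)" by simp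
  also have "\<dots> \<le> q * exp x" using exp_lower_Taylor_quadratic[OF assms] q0 by (rule mult_left_mono)
  finally have "1 \<le> q * exp x" .
  then have "exp (-x) * 1 \<le> exp (-x) * (q * exp x)" by simp
  then show ?thesis by (simp add: q_def exp_minus field_simps)
qed

lemma one_minus_exp_bounds:
  fixes x :: real assumes "0 \<le> x" shows "0 \<le> 1 - exp (-x)" "1 - exp (-x) \<le> x" "1 - exp (-x) \<le> 1"
  using assms exp_ge_add_one_self[of "-x"] by auto

lemma h_ge1: fixes h :: real shows "\<not> h \<le> 1 \<Longrightarrow> min (h\<^sup>2) 1 = 1"
proof -
  assume "\<not> h \<le> 1"
  then have "1*1 \<le> h*h" by (intro mult_mono) auto
  then show ?thesis by (simp add: power2_eq_square)
qed

lemma ww_nonneg: "0 \<le> ww a h" unfolding ww_def by simp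

lemma ww_bound:
  assumes "a > 0" "h > 0" shows "ww a h \<le> max (a\<^sup>2) 1 * min (h\<^sup>2) 1"
proof -
  have ah: "0 \<le> a * h" using assms by simp
  note b = one_minus_exp_bounds[OF ah]
  show ?thesis
  proof (cases "h \<le> 1")
    case True
    have "ww a h \<le> (a*h)\<^sup>2" unfolding ww_def using b by (intro power_mono) auto
    also have "\<dots> = a\<^sup>2 * h\<^sup>2" by (simp add: power_mult_distrib)
    also have "\<dots> \<le> max (a\<^sup>2) 1 * h\<^sup>2" by (intro mult_right_mono) auto
    also have "h\<^sup>2 = min (h\<^sup>2) 1" using True assms(2) by (simp add: power_le_one)
    finally show ?thesis .
  next
    case False
    have "ww a h \<le> 1\<^sup>2" unfolding ww_def using b by (intro power_mono) auto
    also have "\<dots> \<le> max (a\<^sup>2) 1 * min (h\<^sup>2) 1" using h_ge1[of h] False by simp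
    finally show ?thesis .
  qed
qed

lemma F_bound:
  fixes z h :: real assumes "0 \<le> z" "0 < h"
  shows "\<bar>exp (- z * h) + z * h * indicator {0<..1} h - 1\<bar> \<le> max (z\<^sup>2/2) 1 * min (h\<^sup>2) 1"
proof (cases "h \<le> 1")
  case True
  have zh: "0 \<le> z*h" using assms by simp
  have l: "0 \<le> exp (- z * h) - 1 + z*h" using exp_ge_add_one_self[of "-z*h"] by simp
  have u: "exp (- z * h) - 1 + z*h \<le> (z*h)\<^sup>2/2" using exp_neg_upper[OF zh] by simp
  have "\<bar>exp (- z * h) + z * h * indicator {0<..1} h - 1\<bar> = exp (- z * h) - 1 + z*h"
    using True assms l by (simp add: indicator_def)
  also have "\<dots> \<le> z\<^sup>2/2 * h\<^sup>2" using u by (simp add: power_mult_distrib)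
  also have "\<dots> \<le> max (z\<^sup>2/2) 1 * h\<^sup>2" by (intro mult_right_mono) auto
  also have "h\<^sup>2 = min (h\<^sup>2) 1" using True assms(2) by (simp add: power_le_one)
  finally show ?thesis .
next
  case False
  have "exp (- z * h) \<le> 1" "0 < exp (- z * h)" using assms by auto
  then have "\<bar>exp (- z * h) + z * h * indicator {0<..1} h - 1\<bar> \<le> 1"
    using False by (simp add: indicator_def)
  also have "1 \<le> max (z\<^sup>2/2) 1 * min (h\<^sup>2) 1" using h_ge1[of h] False by simp
  finally show ?thesis .
qed

lemma k_bound:
  fixes h :: real assumes "0 < h"
  shows "\<bar>h * indicator {0<..1} h - (1 - exp (-h))\<bar> \<le> 1 * min (h\<^sup>2) 1"
proof (cases "h \<le> 1")
  case True
  have hh: "0 \<le> h" using assms by simp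
  have l: "0 \<le> exp (- h) - 1 + h" using exp_ge_add_one_self[of "-h"] by simp
  have u: "exp (- h) - 1 + h \<le> h\<^sup>2/2" using exp_neg_upper[OF hh] by simp
  have "\<bar>h * indicator {0<..1} h - (1 - exp (-h))\<bar> = exp (- h) - 1 + h"
    using True assms l by (simp add: indicator_def)
  also have "\<dots> \<le> h\<^sup>2" using u zero_le_power2[of h] by linarith
  also have "h\<^sup>2 = min (h\<^sup>2) 1" using True assms by (simp add: power_le_one)
  finally show ?thesis by simp
next
  case False
  have "exp (- h) \<le> 1" "0 < exp (- h)" using assms by auto
  then have "\<bar>h * indicator {0<..1} h - (1 - exp (-h))\<bar> \<le> 1"
    using False by (simp add: indicator_def)
  also have "1 = 1 * min (h\<^sup>2) 1" using h_ge1[of h] False by simp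
  finally show ?thesis .
qed

lemma uu_range: "a > 0 \<Longrightarrow> uu a h \<in> {0..1}"
  unfolding uu_def by auto

lemma uu_pos: "a > 0 \<Longrightarrow> h > 0 \<Longrightarrow> uu a h = exp (- a * h)"
  unfolding uu_def by simp

lemma cont_bounded:
  fixes f :: "real \<Rightarrow> real"
  assumes "continuous_on {0..1} f" obtains B where "B > 0" "\<And>t. t \<in> {0..1} \<Longrightarrow> \<bar>f t\<bar> \<le> B"
proof -
  have "compact (f ` {0..1})" using assms by (intro compact_continuous_image) auto
  then have "bounded (f ` {0..1})" by (rule compact_imp_bounded)
  then obtain B where "B > 0" "\<forall>x\<in>f ` {0..1}. norm x \<le> B" unfolding bounded_pos by blast
  then show ?thesis using that by auto
qed

lemma comp_meas:
  assumes "a > 0" "continuous_on {0..1} f"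
  shows "(\<lambda>h. f (uu a h) * ww a h) \<in> borel_measurable borel"
proof -
  have "continuous_on UNIV (uu a)" unfolding uu_def by (intro continuous_intros)
  then have "continuous_on UNIV (\<lambda>h. f (uu a h))"
    by (rule continuous_on_compose2[OF assms(2)]) (use uu_range[OF assms(1)] in auto)
  moreover have "continuous_on UNIV (ww a)" unfolding ww_def by (intro continuous_intros)
  ultimately have "continuous_on UNIV (\<lambda>h. f (uu a h) * ww a h)" by (intro continuous_intros)
  then show ?thesis by (rule borel_measurable_continuous_onI)
qed

lemma L_int:
  assumes "levy_measure_pos m" "a > 0" "continuous_on {0..1} f"
  shows "integrable m (\<lambda>h. f (uu a h) * ww a h)"
proof -
  obtain B where B: "B > 0" "\<And>t. t \<in> {0..1} \<Longrightarrow> \<bar>f t\<bar> \<le> B" using cont_bounded[OF assms(3)] by blast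
  show ?thesis
  proof (rule lev_int[OF assms(1) comp_meas[OF assms(2,3)]])
    fix h :: real assume h: "0 < h"
    have "\<bar>f (uu a h) * ww a h\<bar> = \<bar>f (uu a h)\<bar> * ww a h" using ww_nonneg by (simp add: abs_mult)
    also have "\<dots> \<le> B * (max (a\<^sup>2) 1 * min (h\<^sup>2) 1)"
      using B(2)[OF uu_range[OF assms(2)]] ww_bound[OF assms(2) h] ww_nonneg B(1)
      by (intro mult_mono) auto
    finally show "\<bar>f (uu a h) * ww a h\<bar> \<le> (B * max (a\<^sup>2) 1) * min (h\<^sup>2) 1" by simp
  qed
qed

lemma ww_int:
  assumes "levy_measure_pos m" "a > 0"
  shows "integrable m (ww a)"
  using L_int[OF assms, of "\<lambda>_. 1"] by simp

lemma L_lin: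
  assumes "levy_measure_pos m" "a > 0" "continuous_on {0..1} f" "continuous_on {0..1} g"
  shows "LL a s m (\<lambda>t. c * f t + d * g t) = c * LL a s m f + d * LL a s m g"
proof -
  have "(\<integral>h. (c * f (uu a h) + d * g (uu a h)) * ww a h \<partial>m)
      = (\<integral>h. c * (f (uu a h) * ww a h) + d * (g (uu a h) * ww a h) \<partial>m)"
    by (simp add: algebra_simps)
  also have "\<dots> = c * (\<integral>h. f (uu a h) * ww a h \<partial>m) + d * (\<integral>h. g (uu a h) * ww a h \<partial>m)"
    using L_int[OF assms(1,2,3)] L_int[OF assms(1,2,4)] by simp
  finally show ?thesis unfolding LL_def by (simp add: algebra_simps)
qed

lemma L_bound:
  assumes "levy_measure_pos m" "a > 0" "continuous_on {0..1} g" "\<And>t. t \<in> {0..1} \<Longrightarrow> \<bar>g t\<bar> \<le> e"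
  shows "\<bar>LL a s m g\<bar> \<le> e * (s\<^sup>2 * a\<^sup>2 + (\<integral>h. ww a h \<partial>m))"
proof -
  have "\<bar>\<integral>h. g (uu a h) * ww a h \<partial>m\<bar> \<le> (\<integral>h. \<bar>g (uu a h) * ww a h\<bar> \<partial>m)"
    by (rule integral_abs_bound)
  also have "\<dots> \<le> (\<integral>h. e * ww a h \<partial>m)"
  proof (rule integral_mono)
    show "integrable m (\<lambda>h. \<bar>g (uu a h) * ww a h\<bar>)" using L_int[OF assms(1-3)] by simp
    show "integrable m (\<lambda>h. e * ww a h)" using ww_int[OF assms(1,2)] by simp
    fix h
    show "\<bar>g (uu a h) * ww a h\<bar> \<le> e * ww a h"
      using assms(4)[OF uu_range[OF assms(2)]] ww_nonneg[of a h]
      by (simp add: abs_mult mult_right_mono)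
  qed
  also have "\<dots> = e * (\<integral>h. ww a h \<partial>m)" by simp
  finally have 1: "\<bar>\<integral>h. g (uu a h) * ww a h \<partial>m\<bar> \<le> e * (\<integral>h. ww a h \<partial>m)" .
  have 2: "\<bar>s\<^sup>2 * a\<^sup>2 * g 1\<bar> \<le> s\<^sup>2 * a\<^sup>2 * e"
    using assms(4)[of 1] by (simp add: abs_mult mult_left_mono)
  show ?thesis unfolding LL_def using 1 2 by (simp add: algebra_simps)
qed

lemma L_scale:
  assumes "levy_measure_pos m" "a > 0" "continuous_on {0..1} f"
  shows "LL a s m (\<lambda>t. c * f t) = c * LL a s m f"
  using L_lin[OF assms assms(3), of s c 0] by simp

lemma L_sum:
  fixes n :: nat and F :: "nat \<Rightarrow> real \<Rightarrow> real"
  assumes "levy_measure_pos m" "a > 0" "\<And>k. continuous_on {0..1} (F k)"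
  shows "LL a s m (\<lambda>t. \<Sum>k\<le>n. F k t) = (\<Sum>k\<le>n. LL a s m (F k))"
proof (induction n)
  case 0
  then show ?case by simp
next
  case (Suc n)
  have c: "continuous_on {0..1} (\<lambda>t. \<Sum>k\<le>n. F k t)" using assms(3) by (intro continuous_intros)
  have "LL a s m (\<lambda>t. \<Sum>k\<le>Suc n. F k t) = LL a s m (\<lambda>t. 1 * (\<Sum>k\<le>n. F k t) + 1 * F (Suc n) t)"
    by simp
  also have "\<dots> = LL a s m (\<lambda>t. \<Sum>k\<le>n. F k t) + LL a s m (F (Suc n))"
    using L_lin[OF assms(1,2) c assms(3), of s 1 1] by simp
  finally show ?case using Suc by simp
qed

lemma L_eq:
  assumes m1: "levy_measure_pos m1" and m2: "levy_measure_pos m2" and a: "a > 0"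
    and mom: "\<And>j. LL a s1 m1 (\<lambda>t. t^j) = LL a s2 m2 (\<lambda>t. t^j)"
    and f: "continuous_on {0..1} f"
  shows "LL a s1 m1 f = LL a s2 m2 f"
proof -
  have Q: "LL a s1 m1 (\<lambda>t. t^j * (1-t)^r) = LL a s2 m2 (\<lambda>t. t^j * (1-t)^r)" for r j
  proof (induction r arbitrary: j)
    case 0
    then show ?case using mom by simp
  next
    case (Suc r)
    have e: "(\<lambda>t. t^j * (1-t)^Suc r) = (\<lambda>t::real. 1 * (t^j * (1-t)^r) + (-1) * (t^Suc j * (1-t)^r))"
      by (auto simp: algebra_simps)
    have c1: "continuous_on {0..1} (\<lambda>t::real. t^j * (1-t)^r)" by (intro continuous_intros)
    have c2: "continuous_on {0..1} (\<lambda>t::real. t^Suc j * (1-t)^r)" by (intro continuous_intros)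
    show ?case unfolding e L_lin[OF m1 a c1 c2] L_lin[OF m2 a c1 c2] Suc.IH[of j] Suc.IH[of "Suc j"]
      by (rule refl)
  qed
  have B: "LL a s1 m1 (Bernstein n k) = LL a s2 m2 (Bernstein n k)" for n k
  proof -
    have e: "Bernstein n k = (\<lambda>t. real (n choose k) * (t^k * (1-t)^(n-k)))"
      by (auto simp: Bernstein_def)
    have c1: "continuous_on {0..1} (\<lambda>t::real. t^k * (1-t)^(n-k))" by (intro continuous_intros)
    show ?thesis unfolding e L_scale[OF m1 a c1] L_scale[OF m2 a c1] using Q by simp
  qed
  have cB: "continuous_on {0..1} (Bernstein n k)" for n k
    unfolding Bernstein_def by (intro continuous_intros)
  define C where "C = (s1\<^sup>2 * a\<^sup>2 + (\<integral>h. ww a h \<partial>m1)) + (s2\<^sup>2 * a\<^sup>2 + (\<integral>h. ww a h \<partial>m2))"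
  have C0: "C \<ge> 0" unfolding C_def using ww_nonneg
    by (intro add_nonneg_nonneg integral_nonneg_AE) auto
  have small: "\<bar>LL a s1 m1 f - LL a s2 m2 f\<bar> \<le> e * C" if e: "e > 0" for e
  proof -
    obtain N where N: "\<forall>n x. N \<le> n \<and> x \<in> {0..1} \<longrightarrow>
        \<bar>f x - (\<Sum>k\<le>n. f (real k / real n) * Bernstein n k x)\<bar> < e"
      using Bernstein_Weierstrass[OF f e] by blast
    define p where "p = (\<lambda>x. \<Sum>k\<le>N. f (real k / real N) * Bernstein N k x)"
    have cp: "continuous_on {0..1} p" unfolding p_def using cB by (intro continuous_intros) auto
    have Lp: "LL a s1 m1 p = LL a s2 m2 p"
      unfolding p_def L_sum[OF m1 a continuous_on_mult_left[OF cB]] L_sum[OF m2 a continuous_on_mult_left[OF cB]]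
        L_scale[OF m1 a cB] L_scale[OF m2 a cB] using B by simp
    have cd: "continuous_on {0..1} (\<lambda>t. 1 * f t + (-1) * p t)" using f cp by (intro continuous_intros)
    have bd: "\<bar>1 * f t + (-1) * p t\<bar> \<le> e" if "t \<in> {0..1}" for t
      using N that unfolding p_def by force
    have d1: "LL a s1 m1 (\<lambda>t. 1 * f t + (-1) * p t) = LL a s1 m1 f - LL a s1 m1 p"
      using L_lin[OF m1 a f cp, of s1 1 "-1"] by simp
    have d2: "LL a s2 m2 (\<lambda>t. 1 * f t + (-1) * p t) = LL a s2 m2 f - LL a s2 m2 p"
      using L_lin[OF m2 a f cp, of s2 1 "-1"] by simp
    have "\<bar>LL a s1 m1 f - LL a s1 m1 p\<bar> \<le> e * (s1\<^sup>2 * a\<^sup>2 + (\<integral>h. ww a h \<partial>m1))"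
      using L_bound[OF m1 a cd bd, of s1] d1 by simp
    moreover have "\<bar>LL a s2 m2 f - LL a s2 m2 p\<bar> \<le> e * (s2\<^sup>2 * a\<^sup>2 + (\<integral>h. ww a h \<partial>m2))"
      using L_bound[OF m2 a cd bd, of s2] d2 by simp
    ultimately show ?thesis unfolding C_def using Lp by (simp add: algebra_simps abs_diff_le_iff)
  qed
  show ?thesis
  proof (rule ccontr)
    assume ne: "LL a s1 m1 f \<noteq> LL a s2 m2 f"
    define D where "D = \<bar>LL a s1 m1 f - LL a s2 m2 f\<bar>"
    have D0: "D > 0" using ne unfolding D_def by simp
    define e where "e = D / (2 * (C + 1))"
    have e0: "e > 0" unfolding e_def using D0 C0 by simp
    have "D \<le> e * C" using small[OF e0] unfolding D_def .
    also have "\<dots> < D" unfolding e_def using D0 C0 by (simp add: field_simps add_nonneg_pos)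
    finally show False by simp
  qed
qed

definition FF :: "real \<Rightarrow> real \<Rightarrow> real" where
  "FF z h = exp (- z * h) + z * h * indicator {0<..1} h - 1"

lemma lk_FF: "lk_exponent g s m z = - g * z + s\<^sup>2 / 2 * z\<^sup>2 + (\<integral>h. FF z h \<partial>m)"
  unfolding lk_exponent_def FF_def by simp

lemma FF_meas: "FF z \<in> borel_measurable borel"
  unfolding FF_def by measurable

lemma FF_int: assumes m: "levy_measure_pos m" and z: "0 \<le> z" shows "integrable m (FF z)"
  by (rule lev_int[OF m FF_meas, of _ "max (z\<^sup>2/2) 1"]) (unfold FF_def, rule F_bound[OF z])

definition kk :: "real \<Rightarrow> real" where "kk h = h * indicator {0<..1} h - (1 - exp (-h))"

lemma kk_meas: "kk \<in> borel_measurable borel"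
  unfolding kk_def by measurable

lemma kk_int: assumes m: "levy_measure_pos m" shows "integrable m kk"
  by (rule lev_int[OF m kk_meas, of 1]) (unfold kk_def, rule k_bound)

lemma lk0: "lk_exponent g s m 0 = 0"
  unfolding lk_FF FF_def by simp

lemma exp_pow: "exp (- (a * real k) * h) = exp (- a * h) ^ k"
  by (simp add: exp_of_nat_mult[symmetric] algebra_simps)

lemma diff2:
  assumes m: "levy_measure_pos m" and a: "a > 0"
  shows "lk_exponent g s m (a * real (n+2)) - 2 * lk_exponent g s m (a * real (n+1))
      + lk_exponent g s m (a * real n) = LL a s m (\<lambda>t. t^n)"
proof -
  have i1: "integrable m (FF (a * real (n+2)))" and i2: "integrable m (FF (a * real (n+1)))"
    and i3: "integrable m (FF (a * real n))" using a by (auto intro!: FF_int[OF m])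
  have I: "(\<integral>h. FF (a * real (n+2)) h \<partial>m) - 2 * (\<integral>h. FF (a * real (n+1)) h \<partial>m)
      + (\<integral>h. FF (a * real n) h \<partial>m)
      = (\<integral>h. FF (a * real (n+2)) h - 2 * FF (a * real (n+1)) h + FF (a * real n) h \<partial>m)"
    using i1 i2 i3 by simp
  also have "\<dots> = (\<integral>h. uu a h ^ n * ww a h \<partial>m)"
  proof (rule integral_cong_AE)
    show "(\<lambda>h. FF (a * real (n+2)) h - 2 * FF (a * real (n+1)) h + FF (a * real n) h) \<in> borel_measurable m"
      using i1 i2 i3 by auto
    show "(\<lambda>h. uu a h ^ n * ww a h) \<in> borel_measurable m"
    proof -
      have "continuous_on {0..1} (\<lambda>t::real. t^n)" by (intro continuous_intros)
      from L_int[OF m a this] show ?thesis by auto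
    qed
    show "AE h in m. FF (a * real (n+2)) h - 2 * FF (a * real (n+1)) h + FF (a * real n) h
        = uu a h ^ n * ww a h"
      using lev_AE[OF m]
    proof eventually_elim
      case (elim h)
      define E where "E = exp (- a * h)"
      have e: "exp (- (a * real k) * h) = E ^ k" for k unfolding E_def by (rule exp_pow)
      have "FF (a * real (n+2)) h - 2 * FF (a * real (n+1)) h + FF (a * real n) h
          = E^(n+2) - 2 * E^(n+1) + E^n"
        unfolding FF_def e[symmetric] by (simp add: algebra_simps)
      also have "\<dots> = E^n * (1 - E)\<^sup>2" by (simp add: algebra_simps power2_eq_square)
      finally show ?case using elim unfolding uu_pos[OF a elim] ww_def E_def by simp
    qed
  qed
  finally have I': "(\<integral>h. FF (a * real (n+2)) h \<partial>m) - 2 * (\<integral>h. FF (a * real (n+1)) h \<partial>m)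
      + (\<integral>h. FF (a * real n) h \<partial>m) = (\<integral>h. uu a h ^ n * ww a h \<partial>m)" .
  have P: "- g * (a * real (n+2)) + s\<^sup>2 / 2 * (a * real (n+2))\<^sup>2
     - 2 * (- g * (a * real (n+1)) + s\<^sup>2 / 2 * (a * real (n+1))\<^sup>2)
     + (- g * (a * real n) + s\<^sup>2 / 2 * (a * real n)\<^sup>2) = s\<^sup>2 * a\<^sup>2"
    by (simp add: algebra_simps power2_eq_square)
  show ?thesis unfolding lk_FF LL_def using I' P by (simp add: algebra_simps)
qed

definition gg :: "real \<Rightarrow> real \<Rightarrow> real \<Rightarrow> real" where
  "gg a z h = (exp (- z * h) - 1 + z * (1 - exp (- h))) / (1 - exp (- a * h))\<^sup>2"

definition fz :: "real \<Rightarrow> real \<Rightarrow> real \<Rightarrow> real" where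
  "fz a z t = (if t \<le> 0 then z - 1 else if t \<ge> 1 then (z\<^sup>2 - z) / (2 * a\<^sup>2) else gg a z (- ln t / a))"

lemma fz_cont:
  assumes a: "a > 0" and z: "z > 0"
  shows "continuous_on {0..1} (fz a z)"
proof -
  let ?c = "\<lambda>t. gg a z (- ln t / a)"
  have den: "(1 - exp (- a * (- ln t / a)))\<^sup>2 \<noteq> 0" if "t \<in> {0<..<1}" for t
  proof -
    have "exp (- a * (- ln t / a)) = t" using that a by simp
    then show ?thesis using that by simp
  qed
  have cc: "continuous_on {0<..<1} ?c"
    unfolding gg_def using den a by (intro continuous_intros) auto
  have cf: "continuous_on {0<..<1} (fz a z)"
    using cc by (rule continuous_on_cong[THEN iffD1, rotated 2]) (auto simp: fz_def)
  have ev0: "eventually (\<lambda>t. ?c t = fz a z t) (at_right 0)"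
  proof -
    have "eventually (\<lambda>t::real. 0 < t) (at_right 0)" by real_asymp
    moreover have "eventually (\<lambda>t::real. t < 1) (at_right 0)" by real_asymp
    ultimately show ?thesis by eventually_elim (simp add: fz_def)
  qed
  have ev1: "eventually (\<lambda>t. ?c t = fz a z t) (at_left 1)"
  proof -
    have "eventually (\<lambda>t::real. 0 < t) (at_left 1)" by real_asymp
    moreover have "eventually (\<lambda>t::real. t < 1) (at_left 1)" by real_asymp
    ultimately show ?thesis by eventually_elim (simp add: fz_def)
  qed
  have L0: "(?c \<longlongrightarrow> z - 1) (at_right 0)"
    unfolding gg_def using a z by real_asymp
  have L1: "(?c \<longlongrightarrow> (z\<^sup>2 - z) / (2 * a\<^sup>2)) (at_left 1)"
  proof -
    have e: "?c t = (exp(-z*(-ln t/a)) - 1 + z*(-ln t/a))/(1-exp(-a*(-ln t/a)))^2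
       - z * ((exp(-(-ln t/a)) - 1 + (-ln t/a))/(1-exp(-a*(-ln t/a)))^2)" for t
      unfolding gg_def by (simp add: diff_divide_distrib add_divide_distrib algebra_simps)
    have A: "((\<lambda>t::real. (exp(-z*(-ln t/a)) - 1 + z*(-ln t/a))/(1-exp(-a*(-ln t/a)))^2) \<longlongrightarrow> z^2/(2*a^2)) (at_left 1)"
      using a z by (real_asymp simp: field_simps power2_eq_square)
    have B: "((\<lambda>t::real. (exp(-(-ln t/a)) - 1 + (-ln t/a))/(1-exp(-a*(-ln t/a)))^2) \<longlongrightarrow> 1/(2*a^2)) (at_left 1)"
      using a by (real_asymp simp: field_simps power2_eq_square)
    have "((\<lambda>t. (exp(-z*(-ln t/a)) - 1 + z*(-ln t/a))/(1-exp(-a*(-ln t/a)))^2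
       - z * ((exp(-(-ln t/a)) - 1 + (-ln t/a))/(1-exp(-a*(-ln t/a)))^2)) \<longlongrightarrow> z^2/(2*a^2) - z * (1/(2*a^2))) (at_left 1)"
      by (intro tendsto_intros A B)
    moreover have "z^2/(2*a^2) - z * (1/(2*a^2)) = (z\<^sup>2 - z) / (2 * a\<^sup>2)" by (simp add: diff_divide_distrib)
    ultimately show ?thesis unfolding e by simp
  qed
  show ?thesis
    unfolding continuous_on_eq_continuous_within
  proof
    fix t :: real assume t: "t \<in> {0..1}"
    show "continuous (at t within {0..1}) (fz a z)"
    proof (cases "t = 0")
      case True
      have "(fz a z \<longlongrightarrow> fz a z 0) (at_right 0)"
        using Lim_transform_eventually[OF L0 ev0] by (simp add: fz_def[of a z 0])
      then show ?thesis using True by (simp add: continuous_within at_within_Icc_at_right)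
    next
      case False
      show ?thesis
      proof (cases "t = 1")
        case True
        have "(fz a z \<longlongrightarrow> fz a z 1) (at_left 1)"
          using Lim_transform_eventually[OF L1 ev1] by (simp add: fz_def[of a z 1])
        then show ?thesis using True by (simp add: continuous_within at_within_Icc_at_left)
      next
        case False
        with \<open>t \<noteq> 0\<close> t have "t \<in> interior {0<..<1::real}" by auto
        then have "isCont (fz a z) t" using cf by (rule continuous_on_interior[rotated])
        then show ?thesis by (rule continuous_at_imp_continuous_at_within)
      qed
    qed
  qed
qed

lemma ident:
  assumes m: "levy_measure_pos m" and a: "a > 0" and z: "z > 0"
  shows "lk_exponent g s m z = LL a s m (fz a z) + z * (- g + s\<^sup>2 / 2 + (\<integral>h. kk h \<partial>m))"
proof -
  have iF: "integrable m (FF z)" using FF_int[OF m] z by simp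
  have ik: "integrable m kk" using kk_int[OF m] .
  have "(\<integral>h. fz a z (uu a h) * ww a h \<partial>m) = (\<integral>h. FF z h - z * kk h \<partial>m)"
  proof (rule integral_cong_AE)
    show "(\<lambda>h. fz a z (uu a h) * ww a h) \<in> borel_measurable m"
      using L_int[OF m a fz_cont[OF a z]] by auto
    show "(\<lambda>h. FF z h - z * kk h) \<in> borel_measurable m" using iF ik by auto
    show "AE h in m. fz a z (uu a h) * ww a h = FF z h - z * kk h"
      using lev_AE[OF m]
    proof eventually_elim
      case (elim h)
      have u: "uu a h = exp (- a * h)" using uu_pos[OF a elim] .
      have u0: "0 < exp (- a * h)" by simp
      have u1: "exp (- a * h) < 1" using a elim by simp
      have l: "- ln (exp (- a * h)) / a = h" using a by simp
      have w: "ww a h \<noteq> 0" unfolding ww_def using u1 a elim by simp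
      have "fz a z (uu a h) * ww a h = gg a z h * ww a h"
        unfolding u fz_def using u0 u1 l by simp
      also have "\<dots> = exp (- z * h) - 1 + z * (1 - exp (- h))"
        using w unfolding gg_def ww_def by simp
      also have "\<dots> = FF z h - z * kk h" unfolding FF_def kk_def by (simp add: algebra_simps)
      finally show ?case .
    qed
  qed
  also have "\<dots> = (\<integral>h. FF z h \<partial>m) - z * (\<integral>h. kk h \<partial>m)" using iF ik by simp
  finally have I: "(\<integral>h. fz a z (uu a h) * ww a h \<partial>m) = (\<integral>h. FF z h \<partial>m) - z * (\<integral>h. kk h \<partial>m)" .
  have f1: "fz a z 1 = (z\<^sup>2 - z) / (2 * a\<^sup>2)" unfolding fz_def by simp
  have "s\<^sup>2 * a\<^sup>2 * ((z\<^sup>2 - z) / (2 * a\<^sup>2)) = s\<^sup>2 * (z\<^sup>2 - z) / 2" using a by (simp add: field_simps)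
  then show ?thesis unfolding lk_FF LL_def I f1 by (simp add: algebra_simps)
qed

theorem mainTheorem8:
  fixes \<alpha> :: real and \<psi>1 \<psi>2 :: "real \<Rightarrow> real"
  assumes "\<alpha> > 0"
    and "sp_laplace_exponent \<psi>1" and "sp_laplace_exponent \<psi>2"
    and "\<exists>d\<ge>0. (\<psi>1 has_real_derivative d) (at 0 within {0..})"
    and "\<exists>d\<ge>0. (\<psi>2 has_real_derivative d) (at 0 within {0..})"
    and "\<forall>n::nat. n \<ge> 1 \<longrightarrow> \<psi>1 (\<alpha> * real n) = \<psi>2 (\<alpha> * real n)"
  shows "\<forall>z\<ge>0. \<psi>1 z = \<psi>2 z"
proof -
  note a = assms(1)
  obtain g1 s1 m1 where m1: "levy_measure_pos m1" and p1: "\<forall>z\<ge>0. \<psi>1 z = lk_exponent g1 s1 m1 z"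
    using assms(2) unfolding sp_laplace_exponent_def by blast
  obtain g2 s2 m2 where m2: "levy_measure_pos m2" and p2: "\<forall>z\<ge>0. \<psi>2 z = lk_exponent g2 s2 m2 z"
    using assms(3) unfolding sp_laplace_exponent_def by blast
  have eqn: "lk_exponent g1 s1 m1 (\<alpha> * real n) = lk_exponent g2 s2 m2 (\<alpha> * real n)" for n
  proof (cases "n = 0")
    case True then show ?thesis by (simp add: lk0)
  next
    case False
    then have "\<psi>1 (\<alpha> * real n) = \<psi>2 (\<alpha> * real n)" using assms(6) by simp
    moreover have "\<alpha> * real n \<ge> 0" using a by simp
    ultimately show ?thesis using p1 p2 by simp
  qed
  have mom: "LL \<alpha> s1 m1 (\<lambda>t. t^j) = LL \<alpha> s2 m2 (\<lambda>t. t^j)" for j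
    using diff2[OF m1 a, of g1 s1 j] diff2[OF m2 a, of g2 s2 j] eqn[of j] eqn[of "j+1"] eqn[of "j+2"]
    by simp
  have LE: "LL \<alpha> s1 m1 (fz \<alpha> z) = LL \<alpha> s2 m2 (fz \<alpha> z)" if "z > 0" for z
    by (rule L_eq[OF m1 m2 a mom fz_cont[OF a that]])
  define c1 where "c1 = - g1 + s1\<^sup>2 / 2 + (\<integral>h. kk h \<partial>m1)"
  define c2 where "c2 = - g2 + s2\<^sup>2 / 2 + (\<integral>h. kk h \<partial>m2)"
  have "lk_exponent g1 s1 m1 \<alpha> = lk_exponent g2 s2 m2 \<alpha>" using eqn[of 1] by simp
  then have "\<alpha> * c1 = \<alpha> * c2"
    unfolding ident[OF m1 a a, of g1 s1] ident[OF m2 a a, of g2 s2] c1_def c2_def using LE[OF a] by simp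
  then have c: "c1 = c2" using a by simp
  show ?thesis
  proof (intro allI impI)
    fix z :: real assume z: "z \<ge> 0"
    show "\<psi>1 z = \<psi>2 z"
    proof (cases "z = 0")
      case True then show ?thesis using p1 p2 by (simp add: lk0)
    next
      case False
      then have zp: "z > 0" using z by simp
      show ?thesis using p1 p2 z ident[OF m1 a zp, of g1 s1] ident[OF m2 a zp, of g2 s2] LE[OF zp] c
        unfolding c1_def c2_def by simp
    qed
  qed
qed

end
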